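(* Let $\triangle ABC$ have side lengths $a=|BC|>b=|CA|>c=|AB|$ and angles $\alpha=\angle A$, $\beta=\angle B$, $\gamma=\angle C$. For $x\in\{a,b,c\}$ let $W_x$ denote the largest area of an equilateral triangle contained in the closed triangle $\triangle ABC$ having one of its sides lying on side $x$. (i) If $60^\circ<\beta<80^\circ<\alpha<90^\circ$, $\alpha/2+\beta<120^\circ$ and $\alpha+\beta/2\ge 120^\circ$, then the minimum of $W_a,W_b,W_c$ is attained on the middle side $b$, and the maximum is attained on both the short side $c$ and the long side $a$ when $\alpha+\beta/2=120^\circ$, and on the long side $a$ when $\alpha+\beta/2>120^\circ$. (ii) If $75^\circ<\beta<90^\circ$, $80^\circ<\alpha<90^\circ$ and $\alpha/2+\beta\ge 120^\circ$, then the maximum of $W_a,W_b,W_c$ is attained on the long side $a$, and the minimum is attained on the short side $c$ when $\alpha/2+\beta>120^\circ$, and on both the short side $c$ and the middle side $b$ when $\alpha/2+\beta=120^\circ$.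
   Context: An equilateral triangle of largest area contained in $\triangle ABC$ with one side lying on a given side of $\triangle ABC$ is called the wedged equilateral triangle (WET) on that side; it need not have all three vertices on the boundary of $\triangle ABC$. The max (resp. min) WET is the one of largest (resp. smallest) area among the three sides. *)

theory Defs
  imports "HOL-Analysis.Analysis"
begin

definition angle_at :: "real^2 \<Rightarrow> real^2 \<Rightarrow> real^2 \<Rightarrow> real" where
  "angle_at P Q R = arccos (((Q - P) \<bullet> (R - P)) / (norm (Q - P) * norm (R - P)))"

definition deg :: "real \<Rightarrow> real" where
  "deg x = x * pi / 180"

definition equilateral :: "real^2 \<Rightarrow> real^2 \<Rightarrow> real^2 \<Rightarrow> bool" where
  "equilateral P Q R \<longleftrightarrow> P \<noteq> Q \<and> dist P Q = dist Q R \<and> dist Q R = dist R P"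

text \<open>Area of an equilateral triangle of side s is sqrt 3 / 4 * s^2.\<close>
definition WET_area :: "real^2 \<Rightarrow> real^2 \<Rightarrow> real^2 \<Rightarrow> real" where
  "WET_area X Y Z = Sup {sqrt 3 / 4 * (dist P Q)\<^sup>2 | P Q R.
      equilateral P Q R \<and> closed_segment P Q \<subseteq> closed_segment X Y \<and>
      convex hull {P, Q, R} \<subseteq> convex hull {X, Y, Z}}"

end

theory Submission
  imports Defs
begin


definition gfun :: "real \<Rightarrow> real" where "gfun t = max (1/2) (sqrt 3 * t / 2)"

lemma side_bound:
  fixes L S m s K w :: real
  assumes L: "L > 0" and S: "S > 0" and s: "s \<ge> 0"
    and ws: "w * S = sqrt 3 / 2 * s * L"
    and h: "m * L\<^sup>2 \<ge> w * K" and hm: "m * L \<ge> s / 2"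
  shows "m * L \<ge> s * gfun (K / S)"
proof -
  have "m * L\<^sup>2 * S \<ge> w * S * K" using h S by (simp add: mult_right_mono mult.commute mult.left_commute)
  hence "m * L\<^sup>2 * S \<ge> sqrt 3 / 2 * s * L * K" using ws by simp
  hence "(m * L) * (L * S) \<ge> (s * (sqrt 3 * (K / S) / 2)) * (L * S)"
    using S by (simp add: power2_eq_square field_simps)
  hence "m * L \<ge> s * (sqrt 3 * (K / S) / 2)" using L S by (simp add: pos_divide_le_eq ac_simps)
  thus ?thesis using hm unfolding gfun_def by (simp add: max_def)
qed

lemma ub_real:
  fixes L N dX S a1 a2 vv w :: real
  assumes L: "L > 0" and S: "S > 0" and SG: "S\<^sup>2 = L\<^sup>2*N - dX\<^sup>2"
    and a: "0 \<le> a1" "a1 \<le> 1" "0 \<le> a2" "a2 \<le> 1" "a1 \<noteq> a2"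
    and vw: "0 \<le> vv" "0 \<le> w" "vv + w \<le> 1"
    and e1: "(a2-a1)\<^sup>2*L\<^sup>2 = (vv-a2)\<^sup>2*L\<^sup>2 + 2*(vv-a2)*w*dX + w\<^sup>2*N"
    and e2: "(vv-a2)\<^sup>2*L\<^sup>2 + 2*(vv-a2)*w*dX + w\<^sup>2*N = (vv-a1)\<^sup>2*L\<^sup>2 + 2*(vv-a1)*w*dX + w\<^sup>2*N"
  shows "\<bar>a2-a1\<bar>*L * (gfun (dX/S) + gfun ((L\<^sup>2 - dX)/S)) \<le> L"
proof -
  have "(a1 - a2) * ((2* vv - a1 - a2)*L\<^sup>2 + 2*w*dX) = 0"
    using e2 by (simp add: algebra_simps power2_eq_square)
  hence h1: "(2* vv - a1 - a2)*L\<^sup>2 + 2*w*dX = 0" using a(5) by simp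
  define s where "s = \<bar>a2-a1\<bar> * L"
  have s0: "s \<ge> 0" unfolding s_def using L by simp
  have vt: "(vv-a2)*L\<^sup>2 + w*dX = (a1-a2)/2*L\<^sup>2" using h1 by (simp add: algebra_simps)
  have "L\<^sup>2 * ((a2-a1)\<^sup>2*L\<^sup>2) = L\<^sup>2*((vv-a2)\<^sup>2*L\<^sup>2 + 2*(vv-a2)*w*dX + w\<^sup>2*N)" using e1 by simp
  also have "\<dots> = ((vv-a2)*L\<^sup>2 + w*dX)\<^sup>2 + w\<^sup>2*(L\<^sup>2*N - dX\<^sup>2)" by (simp add: algebra_simps power2_eq_square)
  also have "\<dots> = ((a1-a2)/2*L\<^sup>2)\<^sup>2 + w\<^sup>2*S\<^sup>2" unfolding vt SG by simp
  finally have eq: "L\<^sup>2 * ((a2-a1)\<^sup>2*L\<^sup>2) = ((a1-a2)/2*L\<^sup>2)\<^sup>2 + w\<^sup>2*S\<^sup>2" .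
  have "w\<^sup>2*S\<^sup>2 = 3/4 * ((a2-a1)\<^sup>2 * L\<^sup>2) * L\<^sup>2" 
  proof -
    have q: "((a1-a2)/2*L\<^sup>2)\<^sup>2 = 1/4 * ((a2-a1)\<^sup>2 * L\<^sup>2) * L\<^sup>2"
      by (simp add: power2_eq_square field_simps)
    define Y where "Y = (a2-a1)\<^sup>2 * L\<^sup>2"
    have eq': "L\<^sup>2 * Y = 1/4 * Y * L\<^sup>2 + w\<^sup>2*S\<^sup>2" using eq unfolding q Y_def .
    have "L\<^sup>2 * Y = Y * L\<^sup>2" by (simp add: mult.commute)
    hence "w\<^sup>2*S\<^sup>2 = 3/4 * Y * L\<^sup>2" using eq' by linarith
    thus ?thesis unfolding Y_def .
  qed
  also have "(a2-a1)\<^sup>2 * L\<^sup>2 = s\<^sup>2" unfolding s_def by (simp add: power_mult_distrib)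
  finally have f: "w\<^sup>2*S\<^sup>2 = 3/4 * s\<^sup>2 * L\<^sup>2" .
  have "(sqrt 3 / 2 * s * L)\<^sup>2 = 3/4 * s\<^sup>2 * L\<^sup>2" by (simp add: power_mult_distrib power_divide)
  hence "(w*S)\<^sup>2 = (sqrt 3 / 2 * s * L)\<^sup>2" using f by (simp add: power_mult_distrib)
  hence ws: "w * S = sqrt 3 / 2 * s * L"
    using vw S s0 L by (simp add: power2_eq_iff_nonneg)
  have hv: "vv * L\<^sup>2 = (a1+a2)/2 * L\<^sup>2 - w*dX" using h1 by (simp add: field_simps)
  have m1: "(a1+a2)/2 * L \<ge> s/2"
  proof -
    have "\<bar>a2-a1\<bar> \<le> a1 + a2" using a by linarith
    hence "\<bar>a2-a1\<bar> * L \<le> (a1+a2) * L" using L by (simp add: mult_right_mono)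
    thus ?thesis unfolding s_def by simp
  qed
  have m2: "(1 - (a1+a2)/2) * L \<ge> s/2"
  proof -
    have "\<bar>a2-a1\<bar> \<le> 2 - (a1 + a2)" using a by linarith
    hence "\<bar>a2-a1\<bar> * L \<le> (2 - (a1+a2)) * L" using L by (simp add: mult_right_mono)
    thus ?thesis unfolding s_def by (simp add: field_simps)
  qed
  have k1: "(a1+a2)/2 * L\<^sup>2 \<ge> w * dX"
  proof -
    have "vv * L\<^sup>2 \<ge> 0" using vw by simp
    thus ?thesis using hv by linarith
  qed
  have k2: "(1 - (a1+a2)/2) * L\<^sup>2 \<ge> w * (L\<^sup>2 - dX)"
  proof -
    have "(1 - vv - w) * L\<^sup>2 \<ge> 0" using vw by simp
    moreover have "(1 - vv - w) * L\<^sup>2 = L\<^sup>2 - vv * L\<^sup>2 - w * L\<^sup>2" by (simp add: algebra_simps)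
    moreover have "(1 - (a1+a2)/2) * L\<^sup>2 = L\<^sup>2 - (a1+a2)/2 * L\<^sup>2" by (simp add: algebra_simps)
    moreover have "w * (L\<^sup>2 - dX) = w * L\<^sup>2 - w * dX" by (simp add: algebra_simps)
    ultimately show ?thesis using hv by argo
  qed
  have b1: "(a1+a2)/2 * L \<ge> s * gfun (dX/S)" by (rule side_bound[OF L S s0 ws k1 m1])
  have b2: "(1 - (a1+a2)/2) * L \<ge> s * gfun ((L\<^sup>2 - dX)/S)" by (rule side_bound[OF L S s0 ws k2 m2])
  have "(a1+a2)/2*L + (1-(a1+a2)/2)*L = L" by (simp add: algebra_simps)
  moreover have "s * (gfun (dX/S) + gfun ((L\<^sup>2 - dX)/S)) = s * gfun (dX/S) + s * gfun ((L\<^sup>2 - dX)/S)"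
    by (simp add: algebra_simps)
  ultimately have "s * (gfun (dX/S) + gfun ((L\<^sup>2 - dX)/S)) \<le> L" using b1 b2 by argo
  thus ?thesis unfolding s_def .
qed



lemma gfun_ge: "gfun t \<ge> 1/2" "gfun t \<ge> sqrt 3 * t / 2" unfolding gfun_def by auto

lemma ex_real:
  fixes L N dX S s0 g1 g2 a1 a2 w vv :: real
  assumes L: "L > 0" and S: "S > 0" and SG: "S\<^sup>2 = L\<^sup>2*N - dX\<^sup>2"
    and g1: "g1 = gfun (dX/S)" and g2: "g2 = gfun ((L\<^sup>2 - dX)/S)"
    and s0: "s0 = L / (g1 + g2)"
    and a1: "a1 = (s0*g1 - s0/2)/L" and a2: "a2 = (s0*g1 + s0/2)/L"
    and w: "w = sqrt 3 / 2 * s0 * L / S" and vv: "vv = s0*g1/L - w*dX/L\<^sup>2"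
  shows "0 \<le> a1" "a1 \<le> 1" "0 \<le> a2" "a2 \<le> 1" "a1 \<noteq> a2" "0 \<le> vv" "0 \<le> w" "vv + w \<le> 1"
    "(a2-a1)\<^sup>2*L\<^sup>2 = s0\<^sup>2"
    "(vv-a2)\<^sup>2*L\<^sup>2 + 2*(vv-a2)*w*dX + w\<^sup>2*N = s0\<^sup>2"
    "(vv-a1)\<^sup>2*L\<^sup>2 + 2*(vv-a1)*w*dX + w\<^sup>2*N = s0\<^sup>2"
proof -
  have g1h: "g1 \<ge> 1/2" "g1 \<ge> sqrt 3 * (dX/S) / 2" unfolding g1 by (fact gfun_ge)+
  have g2h: "g2 \<ge> 1/2" "g2 \<ge> sqrt 3 * ((L\<^sup>2 - dX)/S) / 2" unfolding g2 by (fact gfun_ge)+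
  have gp: "g1 + g2 > 0" using g1h g2h by linarith
  have s0p: "s0 > 0" unfolding s0 using L gp by simp
  have "s0 * (g1 + g2) = L" unfolding s0 using gp by simp
  hence sum: "s0 * g1 + s0 * g2 = L" by (simp add: distrib_left)
  have sg1: "s0*g1 \<ge> s0/2" using mult_left_mono[OF g1h(1), of s0] s0p by simp
  have sg2: "s0*g2 \<ge> s0/2" using mult_left_mono[OF g2h(1), of s0] s0p by simp
  show "0 \<le> a1" unfolding a1 using L sg1 by (simp add: divide_nonneg_pos)
  have "s0*g1 - s0/2 \<le> L" using sum sg2 s0p by linarith
  thus "a1 \<le> 1" unfolding a1 using L by (simp add: pos_divide_le_eq)
  show "0 \<le> a2" unfolding a2 using L s0p sg1 by (simp add: divide_nonneg_pos)
  have "s0*g1 + s0/2 \<le> L" using sum sg2 s0p by linarith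
  thus "a2 \<le> 1" unfolding a2 using L by (simp add: pos_divide_le_eq)
  have a21: "a2 - a1 = s0 / L" unfolding a1 a2 using L by (simp add: field_simps)
  show "a1 \<noteq> a2" using a21 s0p L by auto
  show w0: "0 \<le> w" unfolding w using s0p L S by simp
  have wS: "w * S = sqrt 3 / 2 * s0 * L" unfolding w using S by simp
  show "(a2-a1)\<^sup>2*L\<^sup>2 = s0\<^sup>2" unfolding a21 using L by (simp add: power_divide)
  have "0 \<le> s0 * L * (g1 * S - sqrt 3 * dX / 2)"
  proof -
    have "g1 * S \<ge> sqrt 3 * (dX/S) / 2 * S" by (rule mult_right_mono[OF g1h(2)]) (use S in simp)
    moreover have "sqrt 3 * (dX/S) / 2 * S = sqrt 3 * dX / 2" using S by simp
    ultimately have "g1 * S - sqrt 3 * dX / 2 \<ge> 0" by linarith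
    thus ?thesis using s0p L by simp
  qed
  hence "w * dX / L\<^sup>2 \<le> s0 * g1 / L"
    unfolding w using L S by (simp add: field_simps power2_eq_square)
  thus "0 \<le> vv" unfolding vv by simp
  have "0 \<le> s0 * L * (g2 * S - sqrt 3 * (L\<^sup>2 - dX) / 2)"
  proof -
    have "g2 * S \<ge> sqrt 3 * ((L\<^sup>2 - dX)/S) / 2 * S" by (rule mult_right_mono[OF g2h(2)]) (use S in simp)
    moreover have "sqrt 3 * ((L\<^sup>2 - dX)/S) / 2 * S = sqrt 3 * (L\<^sup>2 - dX) / 2" using S by simp
    ultimately have "g2 * S - sqrt 3 * (L\<^sup>2 - dX) / 2 \<ge> 0" by linarith
    thus ?thesis using s0p L by simp
  qed
  hence "s0 * L * (sqrt 3 * (L\<^sup>2 - dX) / 2) / S \<le> s0 * L * g2 * S / S"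
    using S by (intro divide_right_mono) (auto simp: algebra_simps)
  moreover have "w * (L\<^sup>2 - dX) = s0 * L * (sqrt 3 * (L\<^sup>2 - dX) / 2) / S" unfolding w by simp
  ultimately have "w * (L\<^sup>2 - dX) \<le> s0 * g2 * L" using S by (simp add: ac_simps)
  hence "w * (L\<^sup>2 - dX) / L\<^sup>2 \<le> s0 * g2 * L / L\<^sup>2" using L by (simp add: divide_right_mono)
  also have "s0 * g2 * L / L\<^sup>2 = s0 * g2 / L" using L by (simp add: power2_eq_square)
  finally have "w * (L\<^sup>2 - dX) / L\<^sup>2 \<le> s0 * g2 / L" .
  moreover have "s0 * g2 / L = 1 - s0 * g1 / L" using sum L by (simp add: field_simps)
  moreover have "vv + w = s0 * g1 / L + w * (L\<^sup>2 - dX) / L\<^sup>2" unfolding vv using L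
    by (simp add: field_simps)
  ultimately show "vv + w \<le> 1" by linarith
  have key0: "\<And>a. L\<^sup>2 * ((vv-a)\<^sup>2*L\<^sup>2 + 2*(vv-a)*w*dX + w\<^sup>2*N) = ((vv-a)*L\<^sup>2 + w*dX)\<^sup>2 + w\<^sup>2*(L\<^sup>2*N - dX\<^sup>2)"
    by (simp add: algebra_simps power2_eq_square)
  have key: "\<And>a. L\<^sup>2 * ((vv-a)\<^sup>2*L\<^sup>2 + 2*(vv-a)*w*dX + w\<^sup>2*N) = ((vv-a)*L\<^sup>2 + w*dX)\<^sup>2 + (w*S)\<^sup>2"
    unfolding key0 SG[symmetric] by (simp add: power_mult_distrib)
  have t2: "(vv-a2)*L\<^sup>2 + w*dX = - (s0/2*L)" unfolding vv a2 using L by (simp add: field_simps power2_eq_square)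
  have t1: "(vv-a1)*L\<^sup>2 + w*dX = s0/2*L" unfolding vv a1 using L by (simp add: field_simps power2_eq_square)
  have sq3: "(sqrt 3 / 2 * s0 * L)\<^sup>2 = 3/4 * s0\<^sup>2 * L\<^sup>2" by (simp add: power_mult_distrib power_divide)
  have L2: "L\<^sup>2 > 0" using L by simp
  have "L\<^sup>2 * ((vv-a2)\<^sup>2*L\<^sup>2 + 2*(vv-a2)*w*dX + w\<^sup>2*N) = L\<^sup>2 * s0\<^sup>2"
    unfolding key t2 wS sq3 by (simp add: power2_eq_square algebra_simps)
  thus "(vv-a2)\<^sup>2*L\<^sup>2 + 2*(vv-a2)*w*dX + w\<^sup>2*N = s0\<^sup>2" using L2 by simp
  have "L\<^sup>2 * ((vv-a1)\<^sup>2*L\<^sup>2 + 2*(vv-a1)*w*dX + w\<^sup>2*N) = L\<^sup>2 * s0\<^sup>2"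
    unfolding key t1 wS sq3 by (simp add: power2_eq_square algebra_simps)
  thus "(vv-a1)\<^sup>2*L\<^sup>2 + 2*(vv-a1)*w*dX + w\<^sup>2*N = s0\<^sup>2" using L2 by simp
qed




lemma gram_pos:
  fixes X Y Z :: "real^2"
  assumes "\<not> collinear {X,Y,Z}"
  shows "(norm (Y-X))\<^sup>2 * (norm (Z-X))\<^sup>2 - ((Y-X) \<bullet> (Z-X))\<^sup>2 > 0"
proof -
  have cs: "\<bar>(Y-X) \<bullet> (Z-X)\<bar> \<le> norm (Y-X) * norm (Z-X)" by (rule Cauchy_Schwarz_ineq2)
  have ne: "\<bar>(Y-X) \<bullet> (Z-X)\<bar> \<noteq> norm (Y-X) * norm (Z-X)"
  proof
    assume "\<bar>(Y-X) \<bullet> (Z-X)\<bar> = norm (Y-X) * norm (Z-X)"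
    hence "collinear {0, Y-X, Z-X}" by (simp add: norm_cauchy_schwarz_equal)
    moreover have "collinear {Y,X,Z} = collinear {0, Y-X, Z-X}"
      by (rule collinear_3) (simp add: NO_MATCH_def)
    moreover have "{Y,X,Z} = {X,Y,Z}" by auto
    ultimately show False using assms by simp
  qed
  have lt: "\<bar>(Y-X) \<bullet> (Z-X)\<bar> < norm (Y-X) * norm (Z-X)" using cs ne by linarith
  have "((Y-X) \<bullet> (Z-X))\<^sup>2 = \<bar>(Y-X) \<bullet> (Z-X)\<bar>\<^sup>2" by simp
  also have "\<dots> < (norm (Y-X) * norm (Z-X))\<^sup>2"
    by (rule power_strict_mono[OF lt]) auto
  finally show ?thesis by (simp add: power_mult_distrib)
qed

lemma gram_rot:
  fixes X Y Z :: "real^2"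
  shows "(norm (Y-X))\<^sup>2 * (norm (Z-X))\<^sup>2 - ((Y-X) \<bullet> (Z-X))\<^sup>2 =
         (norm (Z-Y))\<^sup>2 * (norm (X-Y))\<^sup>2 - ((Z-Y) \<bullet> (X-Y))\<^sup>2"
proof -
  define U where "U = Y - X"
  define V where "V = Z - X"
  have 1: "Z - Y = V - U" "X - Y = - U" unfolding U_def V_def by auto
  have e1: "(V - U) \<bullet> (V - U) = V \<bullet> V - 2 * (U \<bullet> V) + U \<bullet> U"
    by (simp add: inner_diff_left inner_diff_right inner_commute)
  have e2: "(V - U) \<bullet> (- U) = U \<bullet> U - U \<bullet> V"
    by (simp add: inner_diff_left inner_diff_right inner_commute)
  show ?thesis unfolding 1 unfolding U_def[symmetric] V_def[symmetric] power2_norm_eq_inner e1 e2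
    by (simp add: power2_eq_square algebra_simps)
qed

lemma aux1: "(N::real) > 0 \<Longrightarrow> 1 - (d/N)\<^sup>2 = (N\<^sup>2 - d\<^sup>2)/N\<^sup>2"
  by (simp add: diff_divide_distrib power_divide)

lemma angle_cos_sin:
  fixes X Y Z :: "real^2"
  assumes "\<not> collinear {X,Y,Z}"
  shows "cos (angle_at X Y Z) = ((Y-X) \<bullet> (Z-X)) / (norm (Y-X) * norm (Z-X))"
    and "sin (angle_at X Y Z) = sqrt ((norm (Y-X))\<^sup>2 * (norm (Z-X))\<^sup>2 - ((Y-X) \<bullet> (Z-X))\<^sup>2) / (norm (Y-X) * norm (Z-X))"
proof -
  have XY: "X \<noteq> Y"
  proof
    assume "X = Y" hence "{X,Y,Z} = {X,Z}" by auto
    thus False using assms collinear_2 by metis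
  qed
  have XZ: "X \<noteq> Z"
  proof
    assume "X = Z" hence "{X,Y,Z} = {X,Y}" by auto
    thus False using assms collinear_2 by metis
  qed
  have p: "norm (Y-X) * norm (Z-X) > 0" using XY XZ by auto
  have cs: "\<bar>(Y-X) \<bullet> (Z-X)\<bar> \<le> norm (Y-X) * norm (Z-X)" by (rule Cauchy_Schwarz_ineq2)
  have le: "\<bar>((Y-X) \<bullet> (Z-X)) / (norm (Y-X) * norm (Z-X))\<bar> \<le> 1"
    using cs p by (metis abs_div_pos abs_mult_pos abs_norm_cancel divide_le_eq_1 norm_ge_zero)
  show "cos (angle_at X Y Z) = ((Y-X) \<bullet> (Z-X)) / (norm (Y-X) * norm (Z-X))"
    unfolding angle_at_def by (rule cos_arccos_abs[OF le])
  have "sin (angle_at X Y Z) = sqrt (1 - (((Y-X) \<bullet> (Z-X)) / (norm (Y-X) * norm (Z-X)))\<^sup>2)"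
    unfolding angle_at_def by (rule sin_arccos_abs[OF le])
  also have "1 - (((Y-X) \<bullet> (Z-X)) / (norm (Y-X) * norm (Z-X)))\<^sup>2 =
     ((norm (Y-X))\<^sup>2 * (norm (Z-X))\<^sup>2 - ((Y-X) \<bullet> (Z-X))\<^sup>2) / (norm (Y-X) * norm (Z-X))\<^sup>2"
    using aux1[OF p] by (simp add: power_mult_distrib)
  also have "sqrt \<dots> = sqrt ((norm (Y-X))\<^sup>2 * (norm (Z-X))\<^sup>2 - ((Y-X) \<bullet> (Z-X))\<^sup>2) / (norm (Y-X) * norm (Z-X))"
    by (simp only: real_sqrt_divide real_sqrt_abs abs_of_pos[OF p])
  finally show "sin (angle_at X Y Z) = sqrt ((norm (Y-X))\<^sup>2 * (norm (Z-X))\<^sup>2 - ((Y-X) \<bullet> (Z-X))\<^sup>2) / (norm (Y-X) * norm (Z-X))" .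
qed



lemma nsq:
  fixes U V :: "'a::real_inner"
  shows "(norm (a *\<^sub>R U + b *\<^sub>R V))\<^sup>2 = a\<^sup>2 * (U \<bullet> U) + 2*a*b*(U \<bullet> V) + b\<^sup>2*(V \<bullet> V)"
  unfolding power2_norm_eq_inner
  by (simp add: inner_add_left inner_add_right inner_commute power2_eq_square algebra_simps)

lemma WET_formula:
  fixes X Y Z :: "real^2"
  assumes nc: "\<not> collinear {X,Y,Z}"
  defines "S \<equiv> sqrt ((norm (Y-X))\<^sup>2 * (norm (Z-X))\<^sup>2 - ((Y-X) \<bullet> (Z-X))\<^sup>2)"
  shows "WET_area X Y Z = sqrt 3 / 4 * (dist X Y / (gfun (((Y-X) \<bullet> (Z-X))/S) + gfun (((X-Y) \<bullet> (Z-Y))/S)))\<^sup>2"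
proof -
  define U where "U = Y - X"
  define V where "V = Z - X"
  define L where "L = dist X Y"
  define N where "N = V \<bullet> V"
  define dX where "dX = U \<bullet> V"
  have LU: "L = norm U" unfolding L_def U_def by (simp add: dist_norm norm_minus_commute)
  have UU: "U \<bullet> U = L\<^sup>2" unfolding LU by (simp add: power2_norm_eq_inner)
  have XY: "X \<noteq> Y"
  proof
    assume "X = Y" hence "{X,Y,Z} = {X,Z}" by auto
    thus False using nc collinear_2 by metis
  qed
  have L: "L > 0" unfolding L_def using XY by simp
  have Gp: "L\<^sup>2 * N - dX\<^sup>2 > 0" using gram_pos[OF nc]
    unfolding LU N_def dX_def U_def V_def by (simp add: power2_norm_eq_inner)
  have Sdef: "S = sqrt (L\<^sup>2 * N - dX\<^sup>2)"
    unfolding S_def LU N_def dX_def U_def V_def by (simp add: power2_norm_eq_inner)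
  have S: "S > 0" unfolding Sdef using Gp by simp
  have SG: "S\<^sup>2 = L\<^sup>2 * N - dX\<^sup>2" unfolding Sdef using Gp by simp
  have dY: "(X-Y) \<bullet> (Z-Y) = L\<^sup>2 - dX"
  proof -
    have "X - Y = - U" "Z - Y = V - U" unfolding U_def V_def by auto
    thus ?thesis unfolding dX_def UU[symmetric] by (simp add: inner_diff_right inner_commute)
  qed
  have dXe: "(Y-X) \<bullet> (Z-X) = dX" unfolding dX_def U_def V_def ..
  define g1 where "g1 = gfun (dX/S)"
  define g2 where "g2 = gfun ((L\<^sup>2 - dX)/S)"
  define s0 where "s0 = L / (g1 + g2)"
  have goal: "sqrt 3 / 4 * (dist X Y / (gfun (((Y-X) \<bullet> (Z-X))/S) + gfun (((X-Y) \<bullet> (Z-Y))/S)))\<^sup>2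
     = sqrt 3 / 4 * s0\<^sup>2" unfolding dXe dY s0_def g1_def g2_def L_def ..
  have g12: "g1 \<ge> 1/2" "g2 \<ge> 1/2" unfolding g1_def g2_def by (fact gfun_ge)+
  have s0p: "s0 > 0" unfolding s0_def using L g12 by simp
  let ?T = "{sqrt 3 / 4 * (dist P Q)\<^sup>2 | P Q R.
      equilateral P Q R \<and> closed_segment P Q \<subseteq> closed_segment X Y \<and>
      convex hull {P, Q, R} \<subseteq> convex hull {X, Y, Z}}"
  have ub: "x \<le> sqrt 3 / 4 * s0\<^sup>2" if "x \<in> ?T" for x
  proof -
    from that obtain P Q R where x: "x = sqrt 3 / 4 * (dist P Q)\<^sup>2" and eq: "equilateral P Q R"
      and seg: "closed_segment P Q \<subseteq> closed_segment X Y"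
      and hl: "convex hull {P, Q, R} \<subseteq> convex hull {X, Y, Z}" by blast
    have "P \<in> closed_segment X Y" using seg ends_in_segment(1) by blast
    then obtain a1 where a1: "0 \<le> a1" "a1 \<le> 1" "P = (1 - a1) *\<^sub>R X + a1 *\<^sub>R Y"
      unfolding in_segment by blast
    have "Q \<in> closed_segment X Y" using seg ends_in_segment(2) by blast
    then obtain a2 where a2: "0 \<le> a2" "a2 \<le> 1" "Q = (1 - a2) *\<^sub>R X + a2 *\<^sub>R Y"
      unfolding in_segment by blast
    have "R \<in> convex hull {P,Q,R}" by (simp add: hull_inc)
    hence "R \<in> convex hull {X,Y,Z}" using hl by blast
    then obtain u vv w where uvw: "0 \<le> u" "0 \<le> vv" "0 \<le> w" "u + vv + w = 1"
      and R: "R = u *\<^sub>R X + vv *\<^sub>R Y + w *\<^sub>R Z"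
      unfolding convex_hull_3 by blast
    have PX: "P = X + a1 *\<^sub>R U" unfolding a1(3) U_def by (simp add: algebra_simps)
    have QX: "Q = X + a2 *\<^sub>R U" unfolding a2(3) U_def by (simp add: algebra_simps)
    have uu: "u = 1 - vv - w" using uvw by simp
    have RX: "R = X + vv *\<^sub>R U + w *\<^sub>R V" unfolding R uu U_def V_def by (simp add: algebra_simps)
    have dPQ: "(dist P Q)\<^sup>2 = (a2-a1)\<^sup>2 * L\<^sup>2"
    proof -
      have "P - Q = (a1 - a2) *\<^sub>R U + 0 *\<^sub>R V" unfolding PX QX by (simp add: algebra_simps)
      hence "(dist P Q)\<^sup>2 = (a1-a2)\<^sup>2 * (U \<bullet> U)" unfolding dist_norm by (simp add: power_mult_distrib power2_norm_eq_inner)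
      thus ?thesis unfolding UU by (simp add: power2_commute)
    qed
    have dRQ: "(dist R Q)\<^sup>2 = (vv-a2)\<^sup>2*L\<^sup>2 + 2*(vv-a2)*w*dX + w\<^sup>2*N"
    proof -
      have "R - Q = (vv - a2) *\<^sub>R U + w *\<^sub>R V" unfolding RX QX by (simp add: algebra_simps)
      hence "(dist R Q)\<^sup>2 = (vv-a2)\<^sup>2*(U \<bullet> U) + 2*(vv-a2)*w*(U \<bullet> V) + w\<^sup>2*(V \<bullet> V)" by (simp only: dist_norm nsq)
      thus ?thesis unfolding UU dX_def N_def .
    qed
    have dRP: "(dist R P)\<^sup>2 = (vv-a1)\<^sup>2*L\<^sup>2 + 2*(vv-a1)*w*dX + w\<^sup>2*N"
    proof -
      have "R - P = (vv - a1) *\<^sub>R U + w *\<^sub>R V" unfolding RX PX by (simp add: algebra_simps)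
      hence "(dist R P)\<^sup>2 = (vv-a1)\<^sup>2*(U \<bullet> U) + 2*(vv-a1)*w*(U \<bullet> V) + w\<^sup>2*(V \<bullet> V)" by (simp only: dist_norm nsq)
      thus ?thesis unfolding UU dX_def N_def .
    qed
    from eq have PQ: "P \<noteq> Q" and e1: "dist P Q = dist Q R" and e2: "dist Q R = dist R P"
      unfolding equilateral_def by auto
    have ne: "a1 \<noteq> a2" using PQ PX QX by auto
    have E1: "(a2-a1)\<^sup>2*L\<^sup>2 = (vv-a2)\<^sup>2*L\<^sup>2 + 2*(vv-a2)*w*dX + w\<^sup>2*N"
      using e1 dPQ dRQ by (simp add: dist_commute)
    have E2: "(vv-a2)\<^sup>2*L\<^sup>2 + 2*(vv-a2)*w*dX + w\<^sup>2*N = (vv-a1)\<^sup>2*L\<^sup>2 + 2*(vv-a1)*w*dX + w\<^sup>2*N"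
      using e2 dRQ dRP by (simp add: dist_commute)
    have "\<bar>a2-a1\<bar>*L * (g1 + g2) \<le> L" unfolding g1_def g2_def
      by (rule ub_real[OF L S SG a1(1,2) a2(1,2) ne uvw(2,3) _ E1 E2]) (use uvw in linarith)
    hence "\<bar>a2-a1\<bar>*L \<le> s0" unfolding s0_def using g12 by (simp add: pos_le_divide_eq)
    moreover have "dist P Q = \<bar>a2-a1\<bar>*L"
    proof -
      have "(dist P Q)\<^sup>2 = (\<bar>a2-a1\<bar>*L)\<^sup>2" unfolding dPQ by (simp add: power_mult_distrib)
      thus ?thesis using L by (simp add: power2_eq_iff_nonneg)
    qed
    ultimately have "dist P Q \<le> s0" by simp
    hence "(dist P Q)\<^sup>2 \<le> s0\<^sup>2" by (simp add: power_mono)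
    thus ?thesis unfolding x by simp
  qed
  have mem: "sqrt 3 / 4 * s0\<^sup>2 \<in> ?T"
  proof -
    define a1 where "a1 = (s0*g1 - s0/2)/L"
    define a2 where "a2 = (s0*g1 + s0/2)/L"
    define w where "w = sqrt 3 / 2 * s0 * L / S"
    define vv where "vv = s0*g1/L - w*dX/L\<^sup>2"
    note ex = ex_real[OF L S SG g1_def g2_def s0_def a1_def a2_def w_def vv_def]
    define P where "P = (1 - a1) *\<^sub>R X + a1 *\<^sub>R Y"
    define Q where "Q = (1 - a2) *\<^sub>R X + a2 *\<^sub>R Y"
    define R where "R = (1 - vv - w) *\<^sub>R X + vv *\<^sub>R Y + w *\<^sub>R Z"
    have PX: "P = X + a1 *\<^sub>R U" unfolding P_def U_def by (simp add: algebra_simps)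
    have QX: "Q = X + a2 *\<^sub>R U" unfolding Q_def U_def by (simp add: algebra_simps)
    have RX: "R = X + vv *\<^sub>R U + w *\<^sub>R V" unfolding R_def U_def V_def by (simp add: algebra_simps)
    have dPQ: "(dist P Q)\<^sup>2 = s0\<^sup>2"
    proof -
      have "P - Q = (a1 - a2) *\<^sub>R U + 0 *\<^sub>R V" unfolding PX QX by (simp add: algebra_simps)
      hence "(dist P Q)\<^sup>2 = (a1-a2)\<^sup>2 * (U \<bullet> U)" unfolding dist_norm by (simp add: power_mult_distrib power2_norm_eq_inner)
      thus ?thesis unfolding UU using ex(9) by (simp add: power2_commute)
    qed
    have dRQ: "(dist R Q)\<^sup>2 = s0\<^sup>2"
    proof -
      have "R - Q = (vv - a2) *\<^sub>R U + w *\<^sub>R V" unfolding RX QX by (simp add: algebra_simps)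
      hence "(dist R Q)\<^sup>2 = (vv-a2)\<^sup>2*(U \<bullet> U) + 2*(vv-a2)*w*(U \<bullet> V) + w\<^sup>2*(V \<bullet> V)" by (simp only: dist_norm nsq)
      thus ?thesis unfolding UU dX_def[symmetric] N_def[symmetric] ex(10) .
    qed
    have dRP: "(dist R P)\<^sup>2 = s0\<^sup>2"
    proof -
      have "R - P = (vv - a1) *\<^sub>R U + w *\<^sub>R V" unfolding RX PX by (simp add: algebra_simps)
      hence "(dist R P)\<^sup>2 = (vv-a1)\<^sup>2*(U \<bullet> U) + 2*(vv-a1)*w*(U \<bullet> V) + w\<^sup>2*(V \<bullet> V)" by (simp only: dist_norm nsq)
      thus ?thesis unfolding UU dX_def[symmetric] N_def[symmetric] ex(11) .
    qed
    have d1: "dist P Q = s0" using dPQ s0p by (simp add: power2_eq_iff_nonneg)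
    have d2: "dist R Q = s0" using dRQ s0p by (simp add: power2_eq_iff_nonneg)
    have d3: "dist R P = s0" using dRP s0p by (simp add: power2_eq_iff_nonneg)
    have eq: "equilateral P Q R" unfolding equilateral_def using d1 d2 d3 s0p
      by (auto simp: dist_commute)
    have Pin: "P \<in> closed_segment X Y" unfolding P_def in_segment using ex(1,2) by blast
    have Qin: "Q \<in> closed_segment X Y" unfolding Q_def in_segment using ex(3,4) by blast
    have seg: "closed_segment P Q \<subseteq> closed_segment X Y"
      by (rule closed_segment_subset[OF Pin Qin convex_closed_segment])
    have "P = (1-a1) *\<^sub>R X + a1 *\<^sub>R Y + 0 *\<^sub>R Z \<and> 0 \<le> 1-a1 \<and> 0 \<le> a1 \<and> 0 \<le> (0::real) \<and> (1-a1)+a1+0 = 1"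
      using ex(1,2) unfolding P_def by auto
    hence PH: "P \<in> convex hull {X,Y,Z}" unfolding convex_hull_3 by blast
    have "Q = (1-a2) *\<^sub>R X + a2 *\<^sub>R Y + 0 *\<^sub>R Z \<and> 0 \<le> 1-a2 \<and> 0 \<le> a2 \<and> 0 \<le> (0::real) \<and> (1-a2)+a2+0 = 1"
      using ex(3,4) unfolding Q_def by auto
    hence QH: "Q \<in> convex hull {X,Y,Z}" unfolding convex_hull_3 by blast
    have "R = (1-vv-w) *\<^sub>R X + vv *\<^sub>R Y + w *\<^sub>R Z \<and> 0 \<le> 1-vv-w \<and> 0 \<le> vv \<and> 0 \<le> w \<and> (1-vv-w)+vv+w = 1"
      using ex(6,7,8) unfolding R_def by auto
    hence RH: "R \<in> convex hull {X,Y,Z}" unfolding convex_hull_3 by blast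
    have hl: "convex hull {P,Q,R} \<subseteq> convex hull {X,Y,Z}"
      by (rule hull_minimal) (use PH QH RH convex_convex_hull in auto)
    show ?thesis using eq seg hl d1 by blast
  qed
  have "WET_area X Y Z = sqrt 3 / 4 * s0\<^sup>2"
    unfolding WET_area_def by (rule cSup_eq_maximum[OF mem ub])
  thus ?thesis using goal by simp
qed



lemma trig_sum:
  fixes \<alpha> \<beta> a b c S dA dB dC :: real
  assumes pos: "a > 0" "b > 0" "c > 0"
    and ca: "cos \<alpha> = dA/(c*b)" and sa: "sin \<alpha> = S/(c*b)"
    and cb: "cos \<beta> = dB/(a*c)" and sb: "sin \<beta> = S/(a*c)"
    and id1: "dA + dB = c\<^sup>2" and id2: "dA*dB - S\<^sup>2 = -(c\<^sup>2*dC)"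
  shows "sin (\<alpha>+\<beta>) = S/(a*b)" "cos (\<alpha>+\<beta>) = -dC/(a*b)"
proof -
  have "sin (\<alpha>+\<beta>) = S*(dA+dB)/(a*b*c\<^sup>2)" unfolding sin_add ca sa cb sb using pos
    by (simp add: field_simps power2_eq_square)
  thus "sin (\<alpha>+\<beta>) = S/(a*b)" unfolding id1 using pos by (simp add: field_simps power2_eq_square)
  have "cos (\<alpha>+\<beta>) = (dA*dB - S\<^sup>2)/(a*b*c\<^sup>2)" unfolding cos_add ca sa cb sb using pos
    by (simp add: field_simps power2_eq_square)
  thus "cos (\<alpha>+\<beta>) = -dC/(a*b)" unfolding id2 using pos by (simp add: field_simps power2_eq_square)
qed

lemma pos_of_div: "0 < (x::real)/d \<Longrightarrow> 0 < d \<Longrightarrow> 0 < x"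
  by (auto simp: zero_less_divide_iff)

lemma fin_helper:
  fixes c s X0 :: real
  assumes "c > 0" "X0 > 0"
  shows "c * s / X0 < c \<longleftrightarrow> s < X0" "c < c * s / X0 \<longleftrightarrow> X0 < s" "c * s / X0 = c \<longleftrightarrow> s = X0"
  using assms by (auto simp: field_simps)

lemma sin_lt:
  fixes x y :: real
  assumes "\<bar>y - pi/2\<bar> < \<bar>x - pi/2\<bar>" "\<bar>x - pi/2\<bar> \<le> pi"
  shows "sin x < sin y"
proof -
  have e: "sin t = cos \<bar>t - pi/2\<bar>" for t :: real
    by (simp add: cos_diff)
  show ?thesis unfolding e[of x] e[of y]
    by (rule cos_monotone_0_pi) (use assms in auto)
qed

lemma W_cmp:
  fixes x y :: real
  assumes "0 < x" "0 < y"
  shows "sqrt 3 / 4 * x\<^sup>2 < sqrt 3 / 4 * y\<^sup>2 \<longleftrightarrow> x < y"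
proof
  assume "sqrt 3 / 4 * x\<^sup>2 < sqrt 3 / 4 * y\<^sup>2"
  hence "x\<^sup>2 < y\<^sup>2" by simp
  thus "x < y" using power_less_imp_less_base[of x 2 y] assms by simp
next
  assume "x < y"
  hence "x\<^sup>2 < y\<^sup>2" by (rule power_strict_mono) (use assms in auto)
  thus "sqrt 3 / 4 * x\<^sup>2 < sqrt 3 / 4 * y\<^sup>2" by simp
qed

theorem mainTheorem3:
  fixes A B C :: "real^2"
  defines "a \<equiv> dist B C" and "b \<equiv> dist C A" and "c \<equiv> dist A B"
  defines "\<alpha> \<equiv> angle_at A B C" and "\<beta> \<equiv> angle_at B C A" and "\<gamma> \<equiv> angle_at C A B"
  defines "Wa \<equiv> WET_area B C A" and "Wb \<equiv> WET_area C A B" and "Wc \<equiv> WET_area A B C"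
  assumes noncollinear: "\<not> collinear {A, B, C}"
  assumes sides: "a > b" "b > c"
  shows
   "(deg 60 < \<beta> \<and> \<beta> < deg 80 \<and> deg 80 < \<alpha> \<and> \<alpha> < deg 90 \<and>
     \<alpha> / 2 + \<beta> < deg 120 \<and> \<alpha> + \<beta> / 2 \<ge> deg 120 \<longrightarrow>
       Wb < Wa \<and> Wb < Wc \<and>
       (\<alpha> + \<beta> / 2 = deg 120 \<longrightarrow> Wa = Wc) \<and>
       (\<alpha> + \<beta> / 2 > deg 120 \<longrightarrow> Wa > Wc))
  \<and> (deg 75 < \<beta> \<and> \<beta> < deg 90 \<and> deg 80 < \<alpha> \<and> \<alpha> < deg 90 \<and>
     \<alpha> / 2 + \<beta> \<ge> deg 120 \<longrightarrow>
       Wa > Wb \<and> Wa > Wc \<and>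
       (\<alpha> / 2 + \<beta> > deg 120 \<longrightarrow> Wc < Wb) \<and>
       (\<alpha> / 2 + \<beta> = deg 120 \<longrightarrow> Wc = Wb))"
proof -
  define dA where "dA = (B-A) \<bullet> (C-A)"
  define dB where "dB = (C-B) \<bullet> (A-B)"
  define dC where "dC = (A-C) \<bullet> (B-C)"
  define S where "S = sqrt ((norm (B-A))\<^sup>2 * (norm (C-A))\<^sup>2 - ((B-A) \<bullet> (C-A))\<^sup>2)"
  have "{B, C, A} = {A, B, C}" "{C, A, B} = {A, B, C}" by auto
  hence nc2: "\<not> collinear {B, C, A}" and nc3: "\<not> collinear {C, A, B}" using noncollinear by simp_all
  have GA: "(norm (B-A))\<^sup>2 * (norm (C-A))\<^sup>2 - ((B-A) \<bullet> (C-A))\<^sup>2 > 0" by (rule gram_pos[OF noncollinear])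
  have S: "S > 0" unfolding S_def using GA by simp
  have SG: "S\<^sup>2 = c\<^sup>2 * b\<^sup>2 - dA\<^sup>2" unfolding S_def dA_def c_def b_def using GA
    by (simp add: dist_norm norm_minus_commute)
  have Sa: "sqrt ((norm (C-B))\<^sup>2 * (norm (A-B))\<^sup>2 - ((C-B) \<bullet> (A-B))\<^sup>2) = S"
    unfolding S_def using gram_rot[where X=A and Y=B and Z=C] by metis
  have Sb: "sqrt ((norm (A-C))\<^sup>2 * (norm (B-C))\<^sup>2 - ((A-C) \<bullet> (B-C))\<^sup>2) = S"
    unfolding Sa[symmetric] using gram_rot[where X=B and Y=C and Z=A] by metis
  have pa: "a > 0" and pb: "b > 0" and pc: "c > 0"
  proof -
    have "A \<noteq> B"
    proof
      assume "A = B" hence "{A,B,C} = {A,C}" by auto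
      thus False using noncollinear collinear_2 by metis
    qed
    moreover have "B \<noteq> C"
    proof
      assume "B = C" hence "{A,B,C} = {A,B}" by auto
      thus False using noncollinear collinear_2 by metis
    qed
    moreover have "C \<noteq> A"
    proof
      assume "C = A" hence "{A,B,C} = {A,B}" by auto
      thus False using noncollinear collinear_2 by metis
    qed
    ultimately have "A \<noteq> B" "B \<noteq> C" "C \<noteq> A" by auto
    thus "a > 0" "b > 0" "c > 0" unfolding a_def b_def c_def by auto
  qed
  have Wc: "Wc = sqrt 3 / 4 * (c / (gfun (dA/S) + gfun (dB/S)))\<^sup>2"
    unfolding Wc_def WET_formula[OF noncollinear] c_def[symmetric] S_def[symmetric]
    unfolding dA_def[symmetric]
      dB_def by (simp add: inner_commute)
  have Wa: "Wa = sqrt 3 / 4 * (a / (gfun (dB/S) + gfun (dC/S)))\<^sup>2"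
    unfolding Wa_def WET_formula[OF nc2] a_def[symmetric] Sa
    unfolding dB_def[symmetric] dC_def
    by (simp add: inner_commute)
  have Wb: "Wb = sqrt 3 / 4 * (b / (gfun (dC/S) + gfun (dA/S)))\<^sup>2"
    unfolding Wb_def WET_formula[OF nc3] b_def[symmetric] Sb
    unfolding dC_def[symmetric] dA_def
    by (simp add: inner_commute)

  have nBA: "norm (B-A) = c" unfolding c_def by (simp add: dist_norm norm_minus_commute)
  have nCA: "norm (C-A) = b" unfolding b_def by (simp add: dist_norm)
  have nCB: "norm (C-B) = a" unfolding a_def by (simp add: dist_norm norm_minus_commute)
  have nAB: "norm (A-B) = c" unfolding c_def by (simp add: dist_norm)
  have ca: "cos \<alpha> = dA/(c*b)" unfolding \<alpha>_def angle_cos_sin(1)[OF noncollinear] nBA nCA dA_def ..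
  have sa: "sin \<alpha> = S/(c*b)" unfolding \<alpha>_def angle_cos_sin(2)[OF noncollinear] S_def[symmetric] unfolding nBA nCA ..
  have cb: "cos \<beta> = dB/(a*c)" unfolding \<beta>_def angle_cos_sin(1)[OF nc2] nCB nAB dB_def ..
  have sb: "sin \<beta> = S/(a*c)" unfolding \<beta>_def angle_cos_sin(2)[OF nc2] Sa unfolding nCB nAB ..
  define U where "U = B - A"
  define V where "V = C - A"
  have e: "C - B = V - U" "A - B = - U" "A - C = - V" "B - C = U - V" unfolding U_def V_def by auto
  have UU: "U \<bullet> U = c\<^sup>2" unfolding U_def nBA[symmetric] by (simp add: power2_norm_eq_inner)
  have VV: "V \<bullet> V = b\<^sup>2" unfolding V_def nCA[symmetric] by (simp add: power2_norm_eq_inner)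
  have dA': "dA = U \<bullet> V" unfolding dA_def U_def V_def ..
  have dB': "dB = c\<^sup>2 - dA" unfolding dB_def e dA' UU[symmetric]
    by (simp add: inner_diff_left inner_diff_right inner_commute)
  have dC': "dC = b\<^sup>2 - dA" unfolding dC_def e dA' VV[symmetric]
    by (simp add: inner_diff_left inner_diff_right inner_commute)
  have id1: "dA + dB = c\<^sup>2" using dB' by simp
  have id2: "dA*dB - S\<^sup>2 = -(c\<^sup>2*dC)" unfolding SG dB' dC' by (simp add: algebra_simps power2_eq_square)
  note ts = trig_sum[OF pa pb pc ca sa cb sb id1 id2]
  define X0 where "X0 = sin (\<alpha>+\<beta>-pi/3)"
  have s3: "sqrt 3 * sqrt 3 = 3" by simp
  have X0e: "X0 = (S + sqrt 3 * dC)/(2*a*b)" unfolding X0_def sin_diff ts sin_60 cos_60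
    using pa pb by (simp add: field_simps)
  have core: "Wa = sqrt 3 / 4 * (c * sin \<alpha> / X0)\<^sup>2 \<and> Wb = sqrt 3 / 4 * (c * sin \<beta> / X0)\<^sup>2 \<and>
      Wc = sqrt 3 / 4 * c\<^sup>2 \<and> X0 > 0"
    if h: "pi/3 < \<alpha>" "\<alpha> < pi/2" "pi/3 < \<beta>" "\<beta> < pi/2" "7*pi/9 < \<alpha>+\<beta>"
  proof -
    have "sin (\<alpha> - pi/3) > 0" by (rule sin_gt_zero) (use h in auto)
    hence "(S - sqrt 3 * dA)/(2*c*b) > 0" unfolding sin_diff sin_60 cos_60 ca sa
      using pb pc by (simp add: field_simps)
    hence "S - sqrt 3 * dA > 0" by (rule pos_of_div) (use pb pc in simp)
    hence gA: "gfun (dA/S) = 1/2" unfolding gfun_def using S by (simp add: max_def field_simps)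
    have "sin (\<beta> - pi/3) > 0" by (rule sin_gt_zero) (use h in auto)
    hence "(S - sqrt 3 * dB)/(2*a*c) > 0" unfolding sin_diff sin_60 cos_60 cb sb
      using pa pc by (simp add: field_simps)
    hence "S - sqrt 3 * dB > 0" by (rule pos_of_div) (use pa pc in simp)
    hence gB: "gfun (dB/S) = 1/2" unfolding gfun_def using S by (simp add: max_def field_simps)
    have "sin (\<alpha>+\<beta>-pi/3-pi/3) > 0" by (rule sin_gt_zero) (use h in auto)
    moreover have "sin (\<alpha>+\<beta>-pi/3-pi/3) = (sqrt 3 * dC - S)/(2*a*b)"
      unfolding sin_diff[of "\<alpha>+\<beta>-pi/3"] cos_diff[of "\<alpha>+\<beta>"] X0_def[symmetric] X0e
      unfolding sin_diff ts sin_60 cos_60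
      using pa pb by (simp add: field_simps)
    ultimately have "0 < (sqrt 3 * dC - S)/(2*a*b)" by simp
    hence "sqrt 3 * dC - S > 0" by (rule pos_of_div) (use pa pb in simp)
    hence gC: "gfun (dC/S) = sqrt 3 * (dC/S) / 2" unfolding gfun_def using S by (simp add: max_def field_simps)
    have X0p: "X0 > 0" unfolding X0e using pa pb S \<open>sqrt 3 * dC - S > 0\<close> by simp
    have sA: "c * sin \<alpha> = S / b" unfolding sa using pc by simp
    have sB: "c * sin \<beta> = S / a" unfolding sb using pc by simp
    have "a / (gfun (dB/S) + gfun (dC/S)) = S / b / X0"
      unfolding gB gC X0e using pa pb S by (simp add: field_simps)
    hence A1: "Wa = sqrt 3 / 4 * (c * sin \<alpha> / X0)\<^sup>2" unfolding Wa sA by simp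
    have "b / (gfun (dC/S) + gfun (dA/S)) = S / a / X0"
      unfolding gA gC X0e using pa pb S by (simp add: field_simps)
    hence B1: "Wb = sqrt 3 / 4 * (c * sin \<beta> / X0)\<^sup>2" unfolding Wb sB by simp
    have C1: "Wc = sqrt 3 / 4 * c\<^sup>2" unfolding Wc gA gB by simp
    show ?thesis using A1 B1 C1 X0p by blast
  qed

  have sA: "c * sin \<alpha> = S / b" unfolding sa using pc by simp
  have sB: "c * sin \<beta> = S / a" unfolding sb using pc by simp
  have pi0: "pi > 0" by (rule pi_gt_zero)
  have ab_cmp: "c * sin \<beta> / X0 < c * sin \<alpha> / X0" if "X0 > 0"
  proof -
    have "S / a < S / b" using S pb sides(1) by (simp add: divide_strict_left_mono)
    thus ?thesis unfolding sA[symmetric] sB[symmetric] using that by (simp add: divide_strict_right_mono)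
  qed
  have part1: "Wb < Wa \<and> Wb < Wc \<and>
       (\<alpha> + \<beta> / 2 = deg 120 \<longrightarrow> Wa = Wc) \<and>
       (\<alpha> + \<beta> / 2 > deg 120 \<longrightarrow> Wa > Wc)"
    if H: "deg 60 < \<beta>" "\<beta> < deg 80" "deg 80 < \<alpha>" "\<alpha> < deg 90"
     "\<alpha> / 2 + \<beta> < deg 120" "\<alpha> + \<beta> / 2 \<ge> deg 120"
  proof -
    note H' = H[unfolded deg_def]
    have cr: "Wa = sqrt 3 / 4 * (c * sin \<alpha> / X0)\<^sup>2 \<and> Wb = sqrt 3 / 4 * (c * sin \<beta> / X0)\<^sup>2 \<and>
      Wc = sqrt 3 / 4 * c\<^sup>2 \<and> X0 > 0"
      by (rule core) (use H' pi0 in linarith)+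
    hence WA: "Wa = sqrt 3 / 4 * (c * sin \<alpha> / X0)\<^sup>2" and WB: "Wb = sqrt 3 / 4 * (c * sin \<beta> / X0)\<^sup>2"
      and WC: "Wc = sqrt 3 / 4 * c\<^sup>2" and X0p: "X0 > 0" by auto
    have sap: "sin \<alpha> > 0" unfolding sa using S pb pc by simp
    have sbp: "sin \<beta> > 0" unfolding sb using S pa pc by simp
    have pA: "c * sin \<alpha> / X0 > 0" using pc sap X0p by simp
    have pB: "c * sin \<beta> / X0 > 0" using pc sbp X0p by simp
    have 1: "Wb < Wa" unfolding WA WB using W_cmp[OF pB pA] ab_cmp[OF X0p] by simp
    have "sin \<beta> < X0" unfolding X0_def by (rule sin_lt) (use H' pi0 in \<open>auto simp: abs_if\<close>)
    hence 2: "Wb < Wc" unfolding WB WC using W_cmp[OF pB pc] fin_helper[OF pc X0p] by simp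
    have 3: "Wa = Wc" if "\<alpha> + \<beta> / 2 = deg 120"
    proof -
      have e: "\<alpha>+\<beta>-pi/3 = pi - \<alpha>" using that unfolding deg_def by simp
      have x: "X0 = sin \<alpha>" unfolding X0_def e by simp
      have "c * sin \<alpha> / X0 = c" unfolding x[symmetric] using X0p pc by simp
      thus ?thesis unfolding WA WC by simp
    qed
    have 4: "Wa > Wc" if "\<alpha> + \<beta> / 2 > deg 120"
    proof -
      have "X0 < sin \<alpha>" unfolding X0_def
        by (rule sin_lt) (use H' pi0 that[unfolded deg_def] in \<open>auto simp: abs_if\<close>)
      thus ?thesis unfolding WA WC using W_cmp[OF pc pA] fin_helper(2)[OF pc X0p] by simp
    qed
    show ?thesis using 1 2 3 4 by blast
  qed
  have part2: "Wa > Wb \<and> Wa > Wc \<and>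
       (\<alpha> / 2 + \<beta> > deg 120 \<longrightarrow> Wc < Wb) \<and>
       (\<alpha> / 2 + \<beta> = deg 120 \<longrightarrow> Wc = Wb)"
    if H: "deg 75 < \<beta>" "\<beta> < deg 90" "deg 80 < \<alpha>" "\<alpha> < deg 90" "\<alpha> / 2 + \<beta> \<ge> deg 120"
  proof -
    note H' = H[unfolded deg_def]
    have cr: "Wa = sqrt 3 / 4 * (c * sin \<alpha> / X0)\<^sup>2 \<and> Wb = sqrt 3 / 4 * (c * sin \<beta> / X0)\<^sup>2 \<and>
      Wc = sqrt 3 / 4 * c\<^sup>2 \<and> X0 > 0"
      by (rule core) (use H' pi0 in linarith)+
    hence WA: "Wa = sqrt 3 / 4 * (c * sin \<alpha> / X0)\<^sup>2" and WB: "Wb = sqrt 3 / 4 * (c * sin \<beta> / X0)\<^sup>2"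
      and WC: "Wc = sqrt 3 / 4 * c\<^sup>2" and X0p: "X0 > 0" by auto
    have sap: "sin \<alpha> > 0" unfolding sa using S pb pc by simp
    have sbp: "sin \<beta> > 0" unfolding sb using S pa pc by simp
    have pA: "c * sin \<alpha> / X0 > 0" using pc sap X0p by simp
    have pB: "c * sin \<beta> / X0 > 0" using pc sbp X0p by simp
    have 1: "Wb < Wa" unfolding WA WB using W_cmp[OF pB pA] ab_cmp[OF X0p] by simp
    have "X0 < sin \<alpha>" unfolding X0_def
      by (rule sin_lt) (use H' pi0 in \<open>auto simp: abs_if\<close>)
    hence 2: "Wc < Wa" unfolding WA WC using W_cmp[OF pc pA] fin_helper(2)[OF pc X0p] by simp
    have 3: "Wc < Wb" if "\<alpha> / 2 + \<beta> > deg 120"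
    proof -
      have "X0 < sin \<beta>" unfolding X0_def
        by (rule sin_lt) (use H' pi0 that[unfolded deg_def] in \<open>auto simp: abs_if\<close>)
      thus ?thesis unfolding WB WC using W_cmp[OF pc pB] fin_helper(2)[OF pc X0p] by simp
    qed
    have 4: "Wc = Wb" if "\<alpha> / 2 + \<beta> = deg 120"
    proof -
      have e: "\<alpha>+\<beta>-pi/3 = pi - \<beta>" using that unfolding deg_def by simp
      have x: "X0 = sin \<beta>" unfolding X0_def e by simp
      have "c * sin \<beta> / X0 = c" unfolding x[symmetric] using X0p pc by simp
      thus ?thesis unfolding WB WC by simp
    qed
    show ?thesis using 1 2 3 4 by blast
  qed
  show ?thesis using part1 part2 by blast
qed

end
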